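(* Let $G_{\|v_0}$ be an initialized prefix-independent game, let $\epsilon\ge0$, let $\lambda^*$ be the least $\epsilon$-fixed point of the negotiation function of $G$, and let $\xi$ be a play starting in $v_0$. If there exists an $\epsilon$-SPE $\bar\sigma$ in $G_{\|v_0}$ such that $\langle\bar\sigma\rangle_{v_0}=\xi$, then $\xi$ is $\lambda^*$-consistent. Conversely, if $G$ is with steady negotiation and $\xi$ is $\lambda^*$-consistent, then there exists an $\epsilon$-SPE $\bar\sigma$ in $G_{\|v_0}$ with $\langle\bar\sigma\rangle_{v_0}=\xi$.
   Context: A game is a tuple $G=(\Pi,V,(V_i)_{i\in\Pi},E,\mu)$ where $\Pi$ is a finite set of players, $(V,E)$ is a finite directed graph in which every vertex has at least one outgoing edge, $(V_i)_{i\in\Pi}$ is a partition of $V$, and $\mu:V^\omega\to\mathbb{R}^\Pi$ is the outcome function. Plays (infinite paths), histories (finite nonempty paths), strategies, profiles, compatibility and $\langle\bar\sigma\rangle_v$ (the play from $v$ generated by a complete profile) are as usual; $G_{\|v_0}$ is $G$ initialized at $v_0$; $-i$ denotes $\Pi\setminus\{i\}$; for a history $hv$, $\bar\sigma_{\|hv}$ is the profile in $G_{\|v}$ with $\sigma_{j\|hv}(h')=\sigma_j(hh')$. $G$ is prefix-independent if $\mu(h\rho)=\mu(\rho)$ for every history $h$ and play $\rho$. For $\epsilon\ge0$, a profile $\bar\sigma$ in $G_{\|v_0}$ is an $\epsilon$-SPE if for every history $hv$ of $G_{\|v_0}$, every player $i$ and every strategy $\sigma'_i$, $\mu_i(h\langle\bar\sigma_{-i\|hv},\sigma'_{i\|hv}\rangle_v)\le\mu_i(h\langle\bar\sigma_{\|hv}\rangle_v)+\epsilon$.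 A requirement is a map $\lambda:V\to\mathbb{R}\cup\{\pm\infty\}$, ordered pointwise. A play $\rho$ is $\lambda$-consistent if for every $i\in\Pi$ and $n$ with $\rho_n\in V_i$, $\mu_i(\rho_n\rho_{n+1}\cdots)\ge\lambda(\rho_n)$. $\lambda\mathrm{Rat}_i(v)$ is the set of profiles $\bar\sigma_{-i}$ in $G_{\|v}$ for which there exists $\sigma_i$ such that for every history $hw$ from $v$ compatible with $\bar\sigma_{-i}$, $\langle\bar\sigma_{\|hw}\rangle_w$ is $\lambda$-consistent. The negotiation function: for $i\in\Pi$, $v\in V_i$, $\mathrm{nego}(\lambda)(v)=\inf_{\bar\sigma_{-i}\in\lambda\mathrm{Rat}_i(v)}\sup_{\sigma_i}\mu_i(\langle\bar\sigma_{-i},\sigma_i\rangle_v)$, $\inf\emptyset=+\infty$. $\lambda$ is an $\epsilon$-fixed point of $\mathrm{nego}$ if $\lambda(v)-\epsilon\le\mathrm{nego}(\lambda)(v)\le\lambda(v)+\epsilon$ for all $v$ (with $\pm\infty\pm\epsilon=\pm\infty$); a least one exists. $G$ is with steady negotiation if for every player $i$, vertex $v$ and requirement $\lambda$, the set $\{\sup_{\sigma_i}\mu_i(\langle\bar\sigma_{-i},\sigma_i\rangle_v)\mid\bar\sigma_{-i}\in\lambda\mathrm{Rat}_i(v)\}$ is empty or has a minimum. *)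

theory Defs
  imports "HOL-Analysis.Analysis"
begin

text \<open>
The vertex set is the (finite) type 'v, the player set is the (finite) type 'p.
The partition (V_i) is given by the owner map own :: 'v => 'p (V_i = {v. own v = i}).
E is the edge relation, mu the outcome function (mu rho i = mu_i(rho)).  A strategy of player i is a function on histories (only its values
on histories ending in V_i matter); a (complete) profile assigns a strategy to each player.
\<close>

definition game :: "('v::finite \<times> 'v) set \<Rightarrow> bool" where
  "game E \<longleftrightarrow> (\<forall>v. \<exists>w. (v, w) \<in> E)"

definition is_play :: "('v \<times> 'v) set \<Rightarrow> (nat \<Rightarrow> 'v) \<Rightarrow> bool" where
  "is_play E \<rho> \<longleftrightarrow> (\<forall>n. (\<rho> n, \<rho> (Suc n)) \<in> E)"

definition is_path :: "('v \<times> 'v) set \<Rightarrow> 'v list \<Rightarrow> bool" where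
  "is_path E h \<longleftrightarrow> h \<noteq> [] \<and> (\<forall>k. Suc k < length h \<longrightarrow> (h ! k, h ! Suc k) \<in> E)"

definition is_history :: "('v \<times> 'v) set \<Rightarrow> 'v \<Rightarrow> 'v list \<Rightarrow> bool" where
  "is_history E v h \<longleftrightarrow> is_path E h \<and> hd h = v"

definition is_strategy :: "('v \<times> 'v) set \<Rightarrow> ('v \<Rightarrow> 'p) \<Rightarrow> 'v \<Rightarrow> 'p \<Rightarrow> ('v list \<Rightarrow> 'v) \<Rightarrow> bool" where
  "is_strategy E own v i \<sigma> \<longleftrightarrow>
     (\<forall>h. is_history E v h \<and> own (last h) = i \<longrightarrow> (last h, \<sigma> h) \<in> E)"

definition is_profile :: "('v \<times> 'v) set \<Rightarrow> ('v \<Rightarrow> 'p) \<Rightarrow> 'v \<Rightarrow> ('p \<Rightarrow> 'v list \<Rightarrow> 'v) \<Rightarrow> bool" where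
  "is_profile E own v \<sigma> \<longleftrightarrow> (\<forall>i. is_strategy E own v i (\<sigma> i))"

text \<open>partial profile sigma_{-i} in G_{||v} (the i-component of sigma is ignored)\<close>
definition is_profile_except :: "('v \<times> 'v) set \<Rightarrow> ('v \<Rightarrow> 'p) \<Rightarrow> 'v \<Rightarrow> 'p \<Rightarrow> ('p \<Rightarrow> 'v list \<Rightarrow> 'v) \<Rightarrow> bool" where
  "is_profile_except E own v i \<sigma> \<longleftrightarrow> (\<forall>j. j \<noteq> i \<longrightarrow> is_strategy E own v j (\<sigma> j))"

fun extend :: "('v \<Rightarrow> 'p) \<Rightarrow> ('p \<Rightarrow> 'v list \<Rightarrow> 'v) \<Rightarrow> 'v list \<Rightarrow> nat \<Rightarrow> 'v list" where
  "extend own \<sigma> h 0 = h"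
| "extend own \<sigma> h (Suc n) =
     (let g = extend own \<sigma> h n in g @ [\<sigma> (own (last g)) g])"

definition outcome :: "('v \<Rightarrow> 'p) \<Rightarrow> ('p \<Rightarrow> 'v list \<Rightarrow> 'v) \<Rightarrow> 'v \<Rightarrow> nat \<Rightarrow> 'v" where
  "outcome own \<sigma> v = (\<lambda>n. last (extend own \<sigma> [v] n))"

text \<open>sigma_{||hv}: sigma_{||hv}(h') = sigma(h h'); here hist = hv\<close>
definition restrict_prof :: "('p \<Rightarrow> 'v list \<Rightarrow> 'v) \<Rightarrow> 'v list \<Rightarrow> ('p \<Rightarrow> 'v list \<Rightarrow> 'v)" where
  "restrict_prof \<sigma> hist = (\<lambda>j h'. \<sigma> j (butlast hist @ h'))"

definition conc :: "'v list \<Rightarrow> (nat \<Rightarrow> 'v) \<Rightarrow> nat \<Rightarrow> 'v" where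
  "conc h \<rho> = (\<lambda>n. if n < length h then h ! n else \<rho> (n - length h))"

definition prefix_independent :: "('v \<times> 'v) set \<Rightarrow> ((nat \<Rightarrow> 'v) \<Rightarrow> 'p \<Rightarrow> real) \<Rightarrow> bool" where
  "prefix_independent E \<mu> \<longleftrightarrow>
     (\<forall>h \<rho>. is_path E h \<and> is_play E \<rho> \<and> (last h, \<rho> 0) \<in> E \<longrightarrow> \<mu> (conc h \<rho>) = \<mu> \<rho>)"

definition eps_SPE ::
  "('v \<times> 'v) set \<Rightarrow> ('v \<Rightarrow> 'p) \<Rightarrow> ((nat \<Rightarrow> 'v) \<Rightarrow> 'p \<Rightarrow> real) \<Rightarrow> real \<Rightarrow> 'v
     \<Rightarrow> ('p \<Rightarrow> 'v list \<Rightarrow> 'v) \<Rightarrow> bool" where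
  "eps_SPE E own \<mu> \<epsilon> v0 \<sigma> \<longleftrightarrow>
     is_profile E own v0 \<sigma> \<and>
     (\<forall>hist i \<tau>. is_history E v0 hist \<and> is_strategy E own v0 i \<tau> \<longrightarrow>
        \<mu> (conc (butlast hist) (outcome own (restrict_prof (\<sigma>(i := \<tau>)) hist) (last hist))) i
          \<le> \<mu> (conc (butlast hist) (outcome own (restrict_prof \<sigma> hist) (last hist))) i + \<epsilon>)"

definition consistent ::
  "('v \<Rightarrow> 'p) \<Rightarrow> ((nat \<Rightarrow> 'v) \<Rightarrow> 'p \<Rightarrow> real) \<Rightarrow> ('v \<Rightarrow> ereal) \<Rightarrow> (nat \<Rightarrow> 'v) \<Rightarrow> bool" where
  "consistent own \<mu> lam \<rho> \<longleftrightarrow>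
     (\<forall>i n. own (\<rho> n) = i \<longrightarrow> ereal (\<mu> (\<lambda>k. \<rho> (n + k)) i) \<ge> lam (\<rho> n))"

definition compatible_except ::
  "('v \<Rightarrow> 'p) \<Rightarrow> 'p \<Rightarrow> ('p \<Rightarrow> 'v list \<Rightarrow> 'v) \<Rightarrow> 'v list \<Rightarrow> bool" where
  "compatible_except own i \<sigma> h \<longleftrightarrow>
     (\<forall>k. Suc k < length h \<and> own (h ! k) \<noteq> i \<longrightarrow> h ! Suc k = \<sigma> (own (h ! k)) (take (Suc k) h))"

text \<open>lambda Rat_i(v), as a set of partial profiles sigma_{-i} (i-component irrelevant)\<close>
definition lamRat ::
  "('v \<times> 'v) set \<Rightarrow> ('v \<Rightarrow> 'p) \<Rightarrow> ((nat \<Rightarrow> 'v) \<Rightarrow> 'p \<Rightarrow> real) \<Rightarrow> ('v \<Rightarrow> ereal) \<Rightarrow> 'p \<Rightarrow> 'v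
     \<Rightarrow> ('p \<Rightarrow> 'v list \<Rightarrow> 'v) set" where
  "lamRat E own \<mu> lam i v =
     {\<sigma>. is_profile_except E own v i \<sigma> \<and>
        (\<exists>\<tau>. is_strategy E own v i \<tau> \<and>
           (\<forall>hist. is_history E v hist \<and> compatible_except own i \<sigma> hist \<longrightarrow>
              consistent own \<mu> lam
                (outcome own (restrict_prof (\<sigma>(i := \<tau>)) hist) (last hist))))}"

definition best_response_value ::
  "('v \<times> 'v) set \<Rightarrow> ('v \<Rightarrow> 'p) \<Rightarrow> ((nat \<Rightarrow> 'v) \<Rightarrow> 'p \<Rightarrow> real) \<Rightarrow> 'p \<Rightarrow> 'v
     \<Rightarrow> ('p \<Rightarrow> 'v list \<Rightarrow> 'v) \<Rightarrow> ereal" where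
  "best_response_value E own \<mu> i v \<sigma> =
     (SUP \<tau>\<in>{\<tau>. is_strategy E own v i \<tau>}. ereal (\<mu> (outcome own (\<sigma>(i := \<tau>)) v) i))"

definition nego ::
  "('v \<times> 'v) set \<Rightarrow> ('v \<Rightarrow> 'p) \<Rightarrow> ((nat \<Rightarrow> 'v) \<Rightarrow> 'p \<Rightarrow> real) \<Rightarrow> ('v \<Rightarrow> ereal) \<Rightarrow> 'v \<Rightarrow> ereal" where
  "nego E own \<mu> lam v =
     (INF \<sigma>\<in>lamRat E own \<mu> lam (own v) v. best_response_value E own \<mu> (own v) v \<sigma>)"

definition eps_fixed_point ::
  "('v \<times> 'v) set \<Rightarrow> ('v \<Rightarrow> 'p) \<Rightarrow> ((nat \<Rightarrow> 'v) \<Rightarrow> 'p \<Rightarrow> real) \<Rightarrow> real \<Rightarrow> ('v \<Rightarrow> ereal) \<Rightarrow> bool" where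
  "eps_fixed_point E own \<mu> \<epsilon> lam \<longleftrightarrow>
     (\<forall>v. lam v - ereal \<epsilon> \<le> nego E own \<mu> lam v \<and> nego E own \<mu> lam v \<le> lam v + ereal \<epsilon>)"

definition least_eps_fixed_point ::
  "('v \<times> 'v) set \<Rightarrow> ('v \<Rightarrow> 'p) \<Rightarrow> ((nat \<Rightarrow> 'v) \<Rightarrow> 'p \<Rightarrow> real) \<Rightarrow> real \<Rightarrow> ('v \<Rightarrow> ereal) \<Rightarrow> bool" where
  "least_eps_fixed_point E own \<mu> \<epsilon> lam \<longleftrightarrow>
     eps_fixed_point E own \<mu> \<epsilon> lam \<and> (\<forall>lam'. eps_fixed_point E own \<mu> \<epsilon> lam' \<longrightarrow> lam \<le> lam')"

definition steady_negotiation ::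
  "('v \<times> 'v) set \<Rightarrow> ('v \<Rightarrow> 'p) \<Rightarrow> ((nat \<Rightarrow> 'v) \<Rightarrow> 'p \<Rightarrow> real) \<Rightarrow> bool" where
  "steady_negotiation E own \<mu> \<longleftrightarrow>
     (\<forall>i v lam. let S = best_response_value E own \<mu> i v ` lamRat E own \<mu> lam i v
              in S = {} \<or> (\<exists>m\<in>S. \<forall>x\<in>S. m \<le> x))"

end

theory Submission
  imports Defs
begin

definition pre :: "(nat \<Rightarrow> 'v) \<Rightarrow> nat \<Rightarrow> 'v list" where
  "pre \<rho> n = map \<rho> [0..<n]"

definition shift :: "nat \<Rightarrow> (nat \<Rightarrow> 'v) \<Rightarrow> nat \<Rightarrow> 'v" where
  "shift n \<rho> = (\<lambda>k. \<rho> (n + k))"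

definition fp where "fp own X h m = extend own X h m ! m"

definition follows where
  "follows own X h \<rho> \<longleftrightarrow> pre \<rho> (length h) = h \<and>
     (\<forall>m. length h \<le> Suc m \<longrightarrow> \<rho> (Suc m) = X (own (\<rho> m)) (pre \<rho> (Suc m)))"

lemma length_pre[simp]: "length (pre \<rho> n) = n" by (simp add: pre_def)
lemma nth_pre[simp]: "k < n \<Longrightarrow> pre \<rho> n ! k = \<rho> k" by (simp add: pre_def)
lemma pre_Suc: "pre \<rho> (Suc n) = pre \<rho> n @ [\<rho> n]" by (simp add: pre_def)
lemma last_pre[simp]: "last (pre \<rho> (Suc n)) = \<rho> n" by (simp add: pre_Suc)
lemma pre_ne[simp]: "pre \<rho> (Suc n) \<noteq> []" by (simp add: pre_Suc)
lemma hd_pre[simp]: "hd (pre \<rho> (Suc n)) = \<rho> 0" by (simp add: pre_def hd_map upt_rec)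
lemma pre_eq_iff: "pre \<rho> n = pre \<rho>' n \<longleftrightarrow> (\<forall>k<n. \<rho> k = \<rho>' k)"
  by (auto simp: pre_def)
lemma take_pre: "m \<le> n \<Longrightarrow> take m (pre \<rho> n) = pre \<rho> m"
  by (simp add: pre_def take_map)
lemma drop_pre: "drop k (pre \<rho> n) = map \<rho> [k..<n]"
  by (simp add: pre_def drop_map)
lemma shift_apply[simp]: "shift n \<rho> k = \<rho> (n + k)" by (simp add: shift_def)
lemma shift_0[simp]: "shift 0 \<rho> = \<rho>" by (simp add: shift_def)
lemma shift_shift[simp]: "shift a (shift b \<rho>) = shift (b + a) \<rho>" by (simp add: shift_def add.assoc)
lemma pre_shift: "pre (shift k \<rho>) n = drop k (pre \<rho> (k + n))"
  by (rule nth_equalityI) auto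

lemma length_extend[simp]: "length (extend own X h n) = length h + n"
  by (induction n) (auto simp: Let_def)

lemma extend_nth_mono:
  "k < length (extend own X h m) \<Longrightarrow> extend own X h (m + d) ! k = extend own X h m ! k"
  by (induction d) (auto simp: Let_def nth_append)

lemma pre_extend: assumes "h \<noteq> []" shows "extend own X h n = pre (fp own X h) (length h + n)"
proof (rule nth_equalityI)
  fix k assume k: "k < length (extend own X h n)"
  show "extend own X h n ! k = pre (fp own X h) (length h + n) ! k"
  proof (cases "k \<le> n")
    case True
    then obtain d where "n = k + d" using le_Suc_ex by blast
    with k assms show ?thesis
      by (simp add: fp_def extend_nth_mono)
  next
    case False
    then obtain d where "k = n + d" by (metis le_Suc_ex nat_le_linear)
    with k show ?thesis by (simp add: fp_def extend_nth_mono)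
  qed
qed simp

lemma follows_fp: assumes "h \<noteq> []" shows "follows own X h (fp own X h)"
  unfolding follows_def
proof (intro conjI allI impI)
  show "pre (fp own X h) (length h) = h" using pre_extend[OF assms, of own X 0] by simp
next
  fix m assume m: "length h \<le> Suc m"
  define n where "n = Suc m - length h"
  have len: "length h + n = Suc m" using m by (simp add: n_def)
  define g where "g = extend own X h n"
  have g: "g = pre (fp own X h) (Suc m)" using pre_extend[OF assms, of own X n] len by (simp add: g_def)
  have "extend own X h (Suc n) = g @ [X (own (last g)) g]" by (simp add: g_def Let_def)
  moreover have "extend own X h (Suc n) = pre (fp own X h) (Suc (Suc m))"
    using pre_extend[OF assms, of own X "Suc n"] len by simp
  ultimately have "pre (fp own X h) (Suc (Suc m)) = g @ [X (own (last g)) g]" by simp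
  hence "fp own X h (Suc m) = (g @ [X (own (last g)) g]) ! Suc m"
    by (metis lessI nth_pre)
  also have "\<dots> = X (own (last g)) g" using g by (simp add: nth_append)
  finally show "fp own X h (Suc m) = X (own (fp own X h m)) (pre (fp own X h) (Suc m))"
    using g by simp
qed

lemma follows_unique:
  assumes "h \<noteq> []" "follows own X h \<rho>1" "follows own X h \<rho>2" shows "\<rho>1 = \<rho>2"
proof
  fix m show "\<rho>1 m = \<rho>2 m"
  proof (induction m rule: less_induct)
    case (less m)
    show ?case
    proof (cases "m < length h")
      case True
      then show ?thesis using assms unfolding follows_def by (metis nth_pre)
    next
      case False
      then obtain m' where m': "m = Suc m'" "length h \<le> Suc m'"
        using assms(1) by (cases m) auto
      have "pre \<rho>1 (Suc m') = pre \<rho>2 (Suc m')" using less m' by (simp add: pre_eq_iff)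
      moreover have "\<rho>1 m' = \<rho>2 m'" using less m' by simp
      ultimately show ?thesis using assms m' unfolding follows_def by metis
    qed
  qed
qed

lemma fp_eq: "h \<noteq> [] \<Longrightarrow> follows own X h \<rho> \<Longrightarrow> fp own X h = \<rho>"
  using follows_fp follows_unique by metis

lemma fp_nth: "k < length h \<Longrightarrow> fp own X h k = h ! k"
proof -
  have "h \<noteq> []" if "k < length h" using that by auto
  thus "k < length h \<Longrightarrow> fp own X h k = h ! k"
    using follows_fp[of h own X] unfolding follows_def by (metis nth_pre)
qed

lemma fp_step: "h \<noteq> [] \<Longrightarrow> length h \<le> Suc m \<Longrightarrow>
   fp own X h (Suc m) = X (own (fp own X h m)) (pre (fp own X h) (Suc m))"
  using follows_fp[of h own X] unfolding follows_def by blast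

lemma outcome_fp: "outcome own X v = fp own X [v]"
proof
  fix n show "outcome own X v n = fp own X [v] n"
    using pre_extend[of "[v]" own X n] by (simp add: outcome_def)
qed

lemma pre_conc: "pre (conc l Oc) (length l + n) = l @ pre Oc n"
  by (rule nth_equalityI) (auto simp: conc_def nth_append)

lemma shift_conc: "shift (length l) (conc l Oc) = Oc"
  by (rule ext) (simp add: conc_def)

lemma fp_restrict:
  assumes "h \<noteq> []" "g \<noteq> []"
  shows "conc (butlast h) (fp own (restrict_prof X h) g) = fp own X (butlast h @ g)"
proof (rule sym, rule fp_eq)
  show "butlast h @ g \<noteq> []" using assms by simp
  define l where "l = butlast h"
  define Oc where "Oc = fp own (restrict_prof X h) g"
  have fO: "follows own (restrict_prof X h) g Oc" unfolding Oc_def by (rule follows_fp[OF assms(2)])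
  show "follows own X (butlast h @ g) (conc (butlast h) (fp own (restrict_prof X h) g))"
    unfolding l_def[symmetric] Oc_def[symmetric] follows_def
  proof (intro conjI allI impI)
    show "pre (conc l Oc) (length (l @ g)) = l @ g"
      using pre_conc[of l Oc "length g"] fO by (simp add: follows_def)
  next
    fix m assume m: "length (l @ g) \<le> Suc m"
    define k where "k = m - length l"
    have mk: "m = length l + k" and gk: "length g \<le> Suc k" using m assms(2) by (auto simp: k_def, cases g, auto)
    have "conc l Oc (Suc m) = Oc (Suc k)" using mk by (simp add: conc_def)
    also have "\<dots> = restrict_prof X h (own (Oc k)) (pre Oc (Suc k))"
      using fO gk unfolding follows_def by blast
    also have "\<dots> = X (own (conc l Oc m)) (pre (conc l Oc) (Suc m))"
      using mk by (simp add: restrict_prof_def l_def conc_def pre_conc[symmetric])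
    finally show "conc l Oc (Suc m) = X (own (conc l Oc m)) (pre (conc l Oc) (Suc m))" .
  qed
qed

lemma conc_outcome:
  "hist \<noteq> [] \<Longrightarrow> conc (butlast hist) (outcome own (restrict_prof X hist) (last hist)) = fp own X hist"
  using fp_restrict[of hist "[last hist]" own X] by (simp add: outcome_fp)

lemma outcome_restrict:
  "hist \<noteq> [] \<Longrightarrow> outcome own (restrict_prof X hist) (last hist) = shift (length hist - 1) (fp own X hist)"
  using conc_outcome[of hist own X] shift_conc[of "butlast hist"] by (metis length_butlast)

lemma fp_pre: assumes "h \<noteq> []" "length h \<le> n" shows "fp own X (pre (fp own X h) n) = fp own X h"
proof (rule fp_eq)
  show "pre (fp own X h) n \<noteq> []" using assms by (cases n) auto
  show "follows own X (pre (fp own X h) n) (fp own X h)"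
    using follows_fp[OF assms(1), of own X] assms(2) unfolding follows_def by auto
qed

lemma is_path_pre: "is_path E (pre \<rho> (Suc m)) \<longleftrightarrow> (\<forall>k<m. (\<rho> k, \<rho> (Suc k)) \<in> E)"
  by (auto simp: is_path_def)

lemma is_history_pre: "is_history E v (pre \<rho> (Suc m)) \<longleftrightarrow> \<rho> 0 = v \<and> (\<forall>k<m. (\<rho> k, \<rho> (Suc k)) \<in> E)"
  by (auto simp: is_history_def is_path_pre)

lemma is_path_snoc: assumes "xs \<noteq> []" shows "is_path E (xs @ [x]) \<longleftrightarrow> is_path E xs \<and> (last xs, x) \<in> E"
proof
  assume p: "is_path E (xs @ [x])"
  have "(xs ! k, xs ! Suc k) \<in> E" if "Suc k < length xs" for k
  proof -
    have "((xs @ [x]) ! k, (xs @ [x]) ! Suc k) \<in> E" using p that unfolding is_path_def by simp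
    then show ?thesis using that by (simp add: nth_append)
  qed
  moreover have "(last xs, x) \<in> E"
  proof -
    have "Suc (length xs - 1) < length (xs @ [x])" using assms by simp
    then have "((xs @ [x]) ! (length xs - 1), (xs @ [x]) ! Suc (length xs - 1)) \<in> E"
      using p unfolding is_path_def by blast
    then show ?thesis using assms by (simp add: nth_append last_conv_nth)
  qed
  ultimately show "is_path E xs \<and> (last xs, x) \<in> E" using assms by (simp add: is_path_def)
next
  assume p: "is_path E xs \<and> (last xs, x) \<in> E"
  show "is_path E (xs @ [x])" unfolding is_path_def
  proof (intro conjI allI impI)
    fix k assume k: "Suc k < length (xs @ [x])"
    show "((xs @ [x]) ! k, (xs @ [x]) ! Suc k) \<in> E"
    proof (cases "Suc k < length xs")
      case True then show ?thesis using p by (simp add: is_path_def nth_append)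
    next
      case False
      hence kk: "k = length xs - 1" using k by simp
      then show ?thesis using p assms by (simp add: nth_append last_conv_nth)
    qed
  qed simp
qed

lemma is_path_app: "a \<noteq> [] \<Longrightarrow> is_path E a \<Longrightarrow> is_path E (last a # b) \<Longrightarrow> is_path E (a @ b)"
proof (induction b rule: rev_induct)
  case Nil then show ?case by simp
next
  case (snoc x b)
  have "is_path E (last a # b) \<and> (last (last a # b), x) \<in> E"
    using is_path_snoc[of "last a # b" E x] snoc.prems by simp
  then show ?case using snoc is_path_snoc[of "a @ b" E x]
    by (cases b) auto
qed

lemma is_path_butlast: "is_path E h \<Longrightarrow> h \<noteq> [] \<Longrightarrow> butlast h \<noteq> [] \<Longrightarrow> is_path E (butlast h)"
  by (auto simp: is_path_def nth_butlast)

lemma history_app: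
  assumes "is_history E v0 h" "is_history E (last h) g"
  shows "is_history E v0 (butlast h @ g)"
proof -
  have hne: "h \<noteq> []" and gne: "g \<noteq> []" using assms by (auto simp: is_history_def is_path_def)
  have g: "g = last h # tl g" using assms gne by (auto simp: is_history_def) (metis list.collapse)
  have "butlast h @ g = h @ tl g" using hne g by (metis append_butlast_last_id append_Cons append_Nil append_assoc)
  moreover have "is_path E (h @ tl g)"
    using is_path_app[of h E "tl g"] assms g hne by (simp add: is_history_def)
  moreover have "hd (h @ tl g) = v0" using assms hne by (simp add: is_history_def)
  ultimately show ?thesis by (simp add: is_history_def)
qed

lemma history_ne: "is_history E v h \<Longrightarrow> h \<noteq> []"
  by (simp add: is_history_def is_path_def)

lemma list_pre: "h = pre (\<lambda>k. h ! k) (length h)"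
  by (rule nth_equalityI) auto

lemma fp_valid:
  assumes "is_profile E own v X" "is_history E v h"
  shows "is_play E (fp own X h) \<and> fp own X h 0 = v"
proof -
  define \<rho> where "\<rho> = fp own X h"
  have hne: "h \<noteq> []" using assms(2) by (rule history_ne)
  have r0: "\<rho> 0 = v" using assms(2) hne by (simp add: \<rho>_def fp_nth is_history_def hd_conv_nth)
  have "\<forall>k<n. (\<rho> k, \<rho> (Suc k)) \<in> E" for n
  proof (induction n)
    case (Suc n)
    have "(\<rho> n, \<rho> (Suc n)) \<in> E"
    proof (cases "Suc n < length h")
      case True
      then show ?thesis using assms(2) by (simp add: \<rho>_def fp_nth is_history_def is_path_def)
    next
      case False
      hence "length h \<le> Suc n" by simp
      hence st: "\<rho> (Suc n) = X (own (\<rho> n)) (pre \<rho> (Suc n))" using fp_step[OF hne] by (simp add: \<rho>_def)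
      have "is_history E v (pre \<rho> (Suc n))" using Suc r0 by (simp add: is_history_pre)
      then show ?thesis using assms(1) st unfolding is_profile_def is_strategy_def by auto
    qed
    then show ?case using Suc by (auto simp: less_Suc_eq)
  qed simp
  then show ?thesis using r0 by (auto simp: is_play_def \<rho>_def)
qed

lemma fp_hist:
  "is_profile E own v X \<Longrightarrow> is_history E v h \<Longrightarrow> is_history E v (pre (fp own X h) (Suc m))"
  using fp_valid[of E own v X h] by (simp add: is_history_pre is_play_def)

lemma play_shift: "is_play E \<rho> \<Longrightarrow> is_play E (shift n \<rho>)"
  by (simp add: is_play_def)

lemma PI_shift:
  assumes "prefix_independent E \<mu>" "is_play E \<rho>"
  shows "\<mu> (shift n \<rho>) = \<mu> \<rho>"
proof (cases n)
  case 0 then show ?thesis by simp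
next
  case (Suc n')
  have "conc (pre \<rho> n) (shift n \<rho>) = \<rho>" by (rule ext) (simp add: conc_def)
  moreover have "is_path E (pre \<rho> n)" using assms(2) Suc by (simp add: is_path_pre is_play_def)
  moreover have "(last (pre \<rho> n), shift n \<rho> 0) \<in> E" using assms(2) Suc by (simp add: is_play_def)
  ultimately show ?thesis using assms unfolding prefix_independent_def
    by (metis play_shift)
qed

lemma eps_SPE_iff:
  "eps_SPE E own \<mu> \<epsilon> v0 \<sigma> \<longleftrightarrow> is_profile E own v0 \<sigma> \<and>
    (\<forall>hist i \<tau>. is_history E v0 hist \<and> is_strategy E own v0 i \<tau> \<longrightarrow>
       \<mu> (fp own (\<sigma>(i := \<tau>)) hist) i \<le> \<mu> (fp own \<sigma> hist) i + \<epsilon>)"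
proof -
  have "conc (butlast hist) (outcome own (restrict_prof Y hist) (last hist)) = fp own Y hist"
    if "is_history E v0 hist" for hist Y using that conc_outcome history_ne by metis
  then show ?thesis unfolding eps_SPE_def
    by (intro conj_cong refl all_cong1 imp_cong) simp_all
qed

lemma profile_upd: "is_profile E own v X \<Longrightarrow> is_strategy E own v i \<tau> \<Longrightarrow> is_profile E own v (X(i := \<tau>))"
  unfolding is_profile_def
  apply (rule allI)
  subgoal for j
    apply (cases "j = i")
    apply simp
    apply simp
    done
  done

lemma restrict_profile:
  assumes "is_profile E own v0 X" "is_history E v0 h"
  shows "is_profile E own (last h) (restrict_prof X h)"
  unfolding is_profile_def is_strategy_def
proof (intro allI impI)
  fix i g assume g: "is_history E (last h) g \<and> own (last g) = i"
  have H: "is_history E v0 (butlast h @ g)" using history_app[OF assms(2)] g by simp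
  have "g \<noteq> []" using history_ne[of E "last h" g] g by simp
  hence "last (butlast h @ g) = last g" by simp
  moreover have "(last (butlast h @ g), X (own (last (butlast h @ g))) (butlast h @ g)) \<in> E"
    using assms(1) H unfolding is_profile_def is_strategy_def by blast
  ultimately show "(last g, restrict_prof X h i g) \<in> E" using g
    unfolding restrict_prof_def by simp
qed

lemma fp_cong:
  assumes "is_profile E own w X" "is_history E w g"
    and "\<And>j g'. is_history E w g' \<Longrightarrow> X j g' = Y j g'"
  shows "fp own X g = fp own Y g"
proof -
  have gne: "g \<noteq> []" using assms(2) history_ne by metis
  have "follows own Y g (fp own X g)"
    using follows_fp[OF gne, of own X] fp_hist[OF assms(1,2)] assms(3) unfolding follows_def by metis
  then show ?thesis using fp_eq[OF gne] by metis
qed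

lemma shift_fp_restrict:
  "h \<noteq> [] \<Longrightarrow> g \<noteq> [] \<Longrightarrow> shift (length h - 1) (fp own X (butlast h @ g)) = fp own (restrict_prof X h) g"
  using fp_restrict[of h g own X] shift_conc[of "butlast h"] by (metis length_butlast)

lemma SPE_restrict:
  assumes PI: "prefix_independent E \<mu>" and S: "eps_SPE E own \<mu> \<epsilon> v0 \<sigma>" and h: "is_history E v0 h"
  shows "eps_SPE E own \<mu> \<epsilon> (last h) (restrict_prof \<sigma> h)"
proof -
  define w where "w = last h"
  define L where "L = length h - 1"
  have hne: "h \<noteq> []" using h history_ne by metis
  have lenbl: "length (butlast h) = L" by (simp add: L_def)
  have prof: "is_profile E own v0 \<sigma>" using S unfolding eps_SPE_iff by blast
  have rprof: "is_profile E own w (restrict_prof \<sigma> h)" using restrict_profile[OF prof h] by (simp add: w_def)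
  show ?thesis unfolding eps_SPE_iff w_def[symmetric]
  proof (intro conjI rprof allI impI)
    fix hist i \<tau>' assume a: "is_history E w hist \<and> is_strategy E own w i \<tau>'"
    have hist: "is_history E w hist" and t': "is_strategy E own w i \<tau>'" using a by auto
    have histne: "hist \<noteq> []" using hist history_ne by metis
    define H where "H = butlast h @ hist"
    have H: "is_history E v0 H" using history_app[OF h] hist by (simp add: H_def w_def)
    define \<tau> where "\<tau> = (\<lambda>g. if take L g = butlast h \<and> is_history E w (drop L g) then \<tau>' (drop L g) else \<sigma> i g)"
    have tstrat: "is_strategy E own v0 i \<tau>"
      unfolding is_strategy_def
    proof (intro allI impI)
      fix g assume g: "is_history E v0 g \<and> own (last g) = i"
      show "(last g, \<tau> g) \<in> E"
      proof (cases "take L g = butlast h \<and> is_history E w (drop L g)")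
        case True
        hence "drop L g \<noteq> []" using history_ne by metis
        hence "last (drop L g) = last g" by simp
        moreover have "(last (drop L g), \<tau>' (drop L g)) \<in> E"
          using True t' g \<open>last (drop L g) = last g\<close> unfolding is_strategy_def by metis
        ultimately show ?thesis using True unfolding \<tau>_def by simp
      next
        case False
        have "(last g, \<sigma> i g) \<in> E" using prof g unfolding is_profile_def is_strategy_def by blast
        then show ?thesis using False unfolding \<tau>_def by auto
      qed
    qed
    have ineq: "\<mu> (fp own (\<sigma>(i := \<tau>)) H) i \<le> \<mu> (fp own \<sigma> H) i + \<epsilon>"
      using S H tstrat unfolding eps_SPE_iff by blast
    have play1: "is_play E (fp own \<sigma> H)" using fp_valid[OF prof H] by blast
    have play2: "is_play E (fp own (\<sigma>(i := \<tau>)) H)" using fp_valid[OF profile_upd[OF prof tstrat] H] by blast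
    have e1: "\<mu> (fp own \<sigma> H) = \<mu> (fp own (restrict_prof \<sigma> h) hist)"
      using PI_shift[OF PI play1, of L] shift_fp_restrict[OF hne histne, of own \<sigma>] by (simp add: H_def L_def)
    have e2: "\<mu> (fp own (\<sigma>(i := \<tau>)) H) = \<mu> (fp own (restrict_prof (\<sigma>(i := \<tau>)) h) hist)"
      using PI_shift[OF PI play2, of L] shift_fp_restrict[OF hne histne, of own "\<sigma>(i := \<tau>)"] by (simp add: H_def L_def)
    have e3: "fp own ((restrict_prof \<sigma> h)(i := \<tau>')) hist = fp own (restrict_prof (\<sigma>(i := \<tau>)) h) hist"
    proof (rule fp_cong[OF profile_upd[OF rprof t'] hist])
      fix j g' assume g': "is_history E w g'"
      have tk: "take L (butlast h @ g') = butlast h" "drop L (butlast h @ g') = g'" using lenbl by auto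
      show "((restrict_prof \<sigma> h)(i := \<tau>')) j g' = restrict_prof (\<sigma>(i := \<tau>)) h j g'"
      proof (cases "j = i")
        case True
        then show ?thesis using g' tk by (simp add: restrict_prof_def \<tau>_def)
      next
        case False
        then show ?thesis by (simp add: restrict_prof_def)
      qed
    qed
    show "\<mu> (fp own ((restrict_prof \<sigma> h)(i := \<tau>')) hist) i \<le> \<mu> (fp own (restrict_prof \<sigma> h) hist) i + \<epsilon>"
      using ineq e1 e2 e3 by simp
  qed
qed

definition lamS where
  "lamS E own \<mu> \<epsilon> v = (INF \<sigma>\<in>{\<sigma>. eps_SPE E own \<mu> \<epsilon> v \<sigma>}. ereal (\<mu> (fp own \<sigma> [v]) (own v)))"

lemma hist_single: "is_history E v [v]" by (simp add: is_history_def is_path_def)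

lemma SPE_profile: "eps_SPE E own \<mu> \<epsilon> v \<sigma> \<Longrightarrow> is_profile E own v \<sigma>"
  unfolding eps_SPE_iff by blast

lemma SPE_consistent:
  assumes PI: "prefix_independent E \<mu>" and S: "eps_SPE E own \<mu> \<epsilon> v \<sigma>"
  shows "consistent own \<mu> (lamS E own \<mu> \<epsilon>) (fp own \<sigma> [v])"
  unfolding consistent_def
proof (intro allI impI)
  fix i n
  define \<rho> where "\<rho> = fp own \<sigma> [v]"
  assume "own (fp own \<sigma> [v] n) = i"
  hence i: "own (\<rho> n) = i" by (simp add: \<rho>_def)
  define h where "h = pre \<rho> (Suc n)"
  have prof: "is_profile E own v \<sigma>" using S by (rule SPE_profile)
  have h: "is_history E v h" unfolding h_def \<rho>_def by (rule fp_hist[OF prof hist_single])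
  have S': "eps_SPE E own \<mu> \<epsilon> (\<rho> n) (restrict_prof \<sigma> h)"
    using SPE_restrict[OF PI S h] by (simp add: h_def)
  have fph: "fp own \<sigma> h = \<rho>" unfolding h_def \<rho>_def by (rule fp_pre) auto
  have "butlast h @ [last h] = h" by (simp add: h_def pre_Suc)
  hence "shift n \<rho> = fp own (restrict_prof \<sigma> h) [\<rho> n]"
    using shift_fp_restrict[of h "[last h]" own \<sigma>] fph by (simp add: h_def)
  moreover have "(\<lambda>k. \<rho> (n + k)) = shift n \<rho>" by (simp add: shift_def)
  ultimately have "(\<lambda>k. \<rho> (n + k)) = fp own (restrict_prof \<sigma> h) [\<rho> n]" by simp
  moreover have "lamS E own \<mu> \<epsilon> (\<rho> n) \<le> ereal (\<mu> (fp own (restrict_prof \<sigma> h) [\<rho> n]) (own (\<rho> n)))"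
    unfolding lamS_def by (rule INF_lower) (use S' in simp)
  ultimately show "lamS E own \<mu> \<epsilon> (fp own \<sigma> [v] n) \<le> ereal (\<mu> (\<lambda>k. fp own \<sigma> [v] (n + k)) i)"
    using i by (simp add: \<rho>_def)
qed

lemma ereal_le_sub: "x \<le> ereal (a + e) \<Longrightarrow> x - ereal e \<le> ereal a"
  by (cases x) auto

lemma nego_lamS:
  assumes PI: "prefix_independent E \<mu>"
  shows "nego E own \<mu> (lamS E own \<mu> \<epsilon>) v - ereal \<epsilon> \<le> lamS E own \<mu> \<epsilon> v"
  unfolding lamS_def[of E own \<mu> \<epsilon> v]
proof (rule INF_greatest)
  fix \<sigma> assume "\<sigma> \<in> {\<sigma>. eps_SPE E own \<mu> \<epsilon> v \<sigma>}"
  hence S: "eps_SPE E own \<mu> \<epsilon> v \<sigma>" by simp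
  have prof: "is_profile E own v \<sigma>" using S by (rule SPE_profile)
  define i where "i = own v"
  have mem: "\<sigma> \<in> lamRat E own \<mu> (lamS E own \<mu> \<epsilon>) i v"
    unfolding lamRat_def
  proof (intro CollectI conjI exI)
    show "is_profile_except E own v i \<sigma>" using prof by (simp add: is_profile_def is_profile_except_def)
    show "is_strategy E own v i (\<sigma> i)" using prof by (simp add: is_profile_def)
    show "\<forall>hist. is_history E v hist \<and> compatible_except own i \<sigma> hist \<longrightarrow>
        consistent own \<mu> (lamS E own \<mu> \<epsilon>) (outcome own (restrict_prof (\<sigma>(i := \<sigma> i)) hist) (last hist))"
    proof (intro allI impI)
      fix hist assume "is_history E v hist \<and> compatible_except own i \<sigma> hist"
      hence hist: "is_history E v hist" by simp
      have "eps_SPE E own \<mu> \<epsilon> (last hist) (restrict_prof \<sigma> hist)" by (rule SPE_restrict[OF PI S hist])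
      then show "consistent own \<mu> (lamS E own \<mu> \<epsilon>) (outcome own (restrict_prof (\<sigma>(i := \<sigma> i)) hist) (last hist))"
        using SPE_consistent[OF PI] by (simp add: outcome_fp)
    qed
  qed
  have "nego E own \<mu> (lamS E own \<mu> \<epsilon>) v \<le> best_response_value E own \<mu> i v \<sigma>"
    using INF_lower[OF mem, of "best_response_value E own \<mu> i v"] unfolding nego_def i_def by simp
  also have "\<dots> \<le> ereal (\<mu> (fp own \<sigma> [v]) i + \<epsilon>)"
    unfolding best_response_value_def
  proof (rule SUP_least)
    fix \<tau> assume "\<tau> \<in> {\<tau>. is_strategy E own v i \<tau>}"
    hence t: "is_strategy E own v i \<tau>" by simp
    have all: "\<forall>hist i \<tau>. is_history E v hist \<and> is_strategy E own v i \<tau> \<longrightarrow>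
       \<mu> (fp own (\<sigma>(i := \<tau>)) hist) i \<le> \<mu> (fp own \<sigma> hist) i + \<epsilon>"
      using S unfolding eps_SPE_iff by (elim conjE)
    have "\<mu> (fp own (\<sigma>(i := \<tau>)) [v]) i \<le> \<mu> (fp own \<sigma> [v]) i + \<epsilon>"
      using all[rule_format, OF conjI[OF hist_single t]] .
    then show "ereal (\<mu> (outcome own (\<sigma>(i := \<tau>)) v) i) \<le> ereal (\<mu> (fp own \<sigma> [v]) i + \<epsilon>)"
      by (simp add: outcome_fp)
  qed
  finally show "nego E own \<mu> (lamS E own \<mu> \<epsilon>) v - ereal \<epsilon> \<le> ereal (\<mu> (fp own \<sigma> [v]) (own v))"
    using ereal_le_sub i_def by metis
qed

lemma consistent_mono: "lam \<le> lam' \<Longrightarrow> consistent own \<mu> lam' \<rho> \<Longrightarrow> consistent own \<mu> lam \<rho>"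
  unfolding consistent_def le_fun_def by (metis order_trans)

lemma nego_mono: "lam \<le> lam' \<Longrightarrow> nego E own \<mu> lam v \<le> nego E own \<mu> lam' v"
  unfolding nego_def
proof (rule INF_superset_mono)
  assume "lam \<le> lam'"
  then show "lamRat E own \<mu> lam' (own v) v \<subseteq> lamRat E own \<mu> lam (own v) v"
    unfolding lamRat_def using consistent_mono by blast
qed simp

lemma dir1:
  assumes PI: "prefix_independent E \<mu>" and lf: "least_eps_fixed_point E own \<mu> \<epsilon> lam"
    and S: "eps_SPE E own \<mu> \<epsilon> v0 \<sigma>" and eps: "\<epsilon> \<ge> 0"
  shows "consistent own \<mu> lam (fp own \<sigma> [v0])"
proof -
  define f where "f = (\<lambda>l v. nego E own \<mu> l v - ereal \<epsilon>)"
  have mono: "mono f" unfolding f_def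
    by (intro monoI le_funI) (simp add: nego_mono ereal_minus_mono)
  define L where "L = lfp f"
  have "f (lamS E own \<mu> \<epsilon>) \<le> lamS E own \<mu> \<epsilon>" unfolding f_def
    by (intro le_funI nego_lamS[OF PI])
  hence L1: "L \<le> lamS E own \<mu> \<epsilon>" unfolding L_def by (rule lfp_lowerbound)
  have fixL: "L = f L" unfolding L_def by (rule lfp_unfold[OF mono])
  have "eps_fixed_point E own \<mu> \<epsilon> L"
    unfolding eps_fixed_point_def
  proof
    fix v
    have Lv: "L v = nego E own \<mu> L v - ereal \<epsilon>" using fun_cong[OF fixL, of v] by (simp add: f_def)
    show "L v - ereal \<epsilon> \<le> nego E own \<mu> L v \<and> nego E own \<mu> L v \<le> L v + ereal \<epsilon>"
      using Lv eps by (cases "nego E own \<mu> L v") auto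
  qed
  hence "lam \<le> L" using lf unfolding least_eps_fixed_point_def by blast
  hence "lam \<le> lamS E own \<mu> \<epsilon>" using L1 by (rule order_trans)
  then show ?thesis using consistent_mono SPE_consistent[OF PI S] by blast
qed

lemma consistent_shift: "consistent own \<mu> lam \<rho> \<Longrightarrow> consistent own \<mu> lam (shift n \<rho>)"
  unfolding consistent_def shift_def
proof (intro allI impI)
  fix i m assume c: "\<forall>i n. own (\<rho> n) = i \<longrightarrow> ereal (\<mu> (\<lambda>k. \<rho> (n + k)) i) \<ge> lam (\<rho> n)"
    and o: "own (\<rho> (n + m)) = i"
  have "ereal (\<mu> (\<lambda>k. \<rho> ((n + m) + k)) i) \<ge> lam (\<rho> (n + m))" using c o by blast
  then show "lam (\<rho> (n + m)) \<le> ereal (\<mu> (\<lambda>k. \<rho> (n + (m + k))) i)" by (simp add: add.assoc)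
qed

lemma compat_snoc:
  assumes "compatible_except own i \<pi> h" "h \<noteq> []" "own (last h) = i \<or> w = \<pi> (own (last h)) h"
  shows "compatible_except own i \<pi> (h @ [w])"
  unfolding compatible_except_def
proof (intro allI impI)
  fix k assume k: "Suc k < length (h @ [w]) \<and> own ((h @ [w]) ! k) \<noteq> i"
  show "(h @ [w]) ! Suc k = \<pi> (own ((h @ [w]) ! k)) (take (Suc k) (h @ [w]))"
  proof (cases "Suc k < length h")
    case True
    then show ?thesis using assms(1) k unfolding compatible_except_def by (simp add: nth_append)
  next
    case False
    hence kk: "k = length h - 1" "Suc k = length h" using k assms(2) by auto
    hence "(h @ [w]) ! k = last h" using assms(2) by (simp add: nth_append last_conv_nth)
    then show ?thesis using kk k assms(3) by simp
  qed
qed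

locale D2 =
  fixes E :: "('v::finite \<times> 'v) set" and own :: "'v \<Rightarrow> 'p" and \<mu> :: "(nat \<Rightarrow> 'v) \<Rightarrow> 'p \<Rightarrow> real"
    and \<epsilon> :: real and lam :: "'v \<Rightarrow> ereal" and \<xi> :: "nat \<Rightarrow> 'v" and v0 :: 'v
  assumes game: "game E" and PI: "prefix_independent E \<mu>"
    and efp: "eps_fixed_point E own \<mu> \<epsilon> lam" and steady: "steady_negotiation E own \<mu>"
    and xplay: "is_play E \<xi>" and x0: "\<xi> 0 = v0" and xcons: "consistent own \<mu> lam \<xi>" and eps: "\<epsilon> \<ge> 0"
begin

definition succ :: "'v \<Rightarrow> 'v" where "succ v = (SOME w. (v, w) \<in> E)"

lemma succ: "(v, succ v) \<in> E"
  using game unfolding game_def succ_def by (metis someI_ex)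

definition Xi :: "'v list \<Rightarrow> 'v" where
  "Xi g = (if g = pre \<xi> (length g) then \<xi> (length g) else succ (last g))"

definition good :: "'v \<Rightarrow> ('p \<Rightarrow> 'v list \<Rightarrow> 'v) \<Rightarrow> bool" where
  "good u \<pi> \<longleftrightarrow> is_profile E own u \<pi> \<and>
     (\<forall>hist. is_history E u hist \<and> compatible_except own (own u) \<pi> hist \<longrightarrow>
        consistent own \<mu> lam (shift (length hist - 1) (fp own \<pi> hist))) \<and>
     (\<forall>\<tau>. is_strategy E own u (own u) \<tau> \<longrightarrow>
        ereal (\<mu> (fp own (\<pi>(own u := \<tau>)) [u]) (own u)) \<le> lam u + ereal \<epsilon>)"

definition Pun :: "'v \<Rightarrow> ('p \<Rightarrow> 'v list \<Rightarrow> 'v)" where "Pun u = (SOME \<pi>. good u \<pi>)"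

lemma Pun_exists:
  assumes fin: "lam u < \<infinity>"
  shows "\<exists>\<pi>. good u \<pi>"
proof -
  define i where "i = own u"
  define R where "R = lamRat E own \<mu> lam i u"
  define S where "S = best_response_value E own \<mu> i u ` R"
  have ng: "nego E own \<mu> lam u \<le> lam u + ereal \<epsilon>" using efp unfolding eps_fixed_point_def by blast
  have nfin: "nego E own \<mu> lam u < \<infinity>" using ng fin by (cases "lam u") auto
  have nS: "nego E own \<mu> lam u = Inf S" unfolding nego_def S_def R_def i_def by simp
  have "S \<noteq> {}" using nfin nS by (auto simp: top_ereal_def)
  then obtain m where mS: "m \<in> S" and mmin: "\<forall>x\<in>S. m \<le> x"
    using steady unfolding steady_negotiation_def S_def R_def Let_def by blast
  obtain \<pi>0 where p0: "\<pi>0 \<in> R" and m: "m = best_response_value E own \<mu> i u \<pi>0"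
    using mS unfolding S_def by blast
  have "m \<le> Inf S" using mmin by (simp add: Inf_greatest)
  hence brv: "best_response_value E own \<mu> i u \<pi>0 \<le> lam u + ereal \<epsilon>" using ng nS m by simp
  obtain \<tau> where pe: "is_profile_except E own u i \<pi>0" and t: "is_strategy E own u i \<tau>"
    and cons: "\<forall>hist. is_history E u hist \<and> compatible_except own i \<pi>0 hist \<longrightarrow>
              consistent own \<mu> lam (outcome own (restrict_prof (\<pi>0(i := \<tau>)) hist) (last hist))"
    using p0 unfolding R_def lamRat_def by blast
  define \<pi> where "\<pi> = \<pi>0(i := \<tau>)"
  have "good u \<pi>" unfolding good_def i_def[symmetric]
  proof (intro conjI allI impI)
    show "is_profile E own u \<pi>" unfolding is_profile_def \<pi>_def
    proof
      fix j show "is_strategy E own u j ((\<pi>0(i := \<tau>)) j)"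
        using pe t unfolding is_profile_except_def by (cases "j = i") auto
    qed
  next
    fix hist assume h: "is_history E u hist \<and> compatible_except own i \<pi> hist"
    have "compatible_except own i \<pi>0 hist" using h unfolding compatible_except_def \<pi>_def by auto
    then have "consistent own \<mu> lam (outcome own (restrict_prof \<pi> hist) (last hist))"
      using cons h unfolding \<pi>_def by blast
    moreover have "hist \<noteq> []" using h history_ne by metis
    ultimately show "consistent own \<mu> lam (shift (length hist - 1) (fp own \<pi> hist))"
      by (simp add: outcome_restrict)
  next
    fix \<tau>' assume t': "is_strategy E own u i \<tau>'"
    have "ereal (\<mu> (outcome own (\<pi>0(i := \<tau>')) u) i) \<le> best_response_value E own \<mu> i u \<pi>0"
      unfolding best_response_value_def by (rule SUP_upper) (use t' in simp)
    then show "ereal (\<mu> (fp own (\<pi>(i := \<tau>')) [u]) i) \<le> lam u + ereal \<epsilon>"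
      using brv by (simp add: \<pi>_def outcome_fp)
  qed
  then show ?thesis by blast
qed

lemma Pun_good: "lam u < \<infinity> \<Longrightarrow> good u (Pun u)"
  unfolding Pun_def using Pun_exists someI_ex by metis

definition predicted :: "'v list \<Rightarrow> nat option \<Rightarrow> 'v" where
  "predicted g m = (case m of None \<Rightarrow> Xi g | Some k \<Rightarrow> Pun (g ! k) (own (last g)) (drop k g))"

definition upd :: "'v list \<Rightarrow> 'v \<Rightarrow> nat option \<Rightarrow> nat option" where
  "upd g w m = (if w = predicted g m then m else
     (case m of None \<Rightarrow> Some (length g - 1)
      | Some k \<Rightarrow> if own (g ! k) = own (last g) \<and> lam (g ! k) \<le> lam (last g) then Some k
                  else Some (length g - 1)))"

fun moder :: "'v list \<Rightarrow> nat option" where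
  "moder [] = None"
| "moder [v] = None"
| "moder (w # v # r) = upd (rev (v # r)) w (moder (v # r))"

definition mode :: "'v list \<Rightarrow> nat option" where "mode g = moder (rev g)"

lemma mode_single[simp]: "mode [v] = None" by (simp add: mode_def)

lemma mode_snoc: assumes "g \<noteq> []" shows "mode (g @ [w]) = upd g w (mode g)"
proof -
  obtain v r where "rev g = v # r" using assms by (cases "rev g") auto
  moreover have "g = rev (v # r)" using calculation by (metis rev_rev_ident)
  ultimately show ?thesis by (simp add: mode_def)
qed

definition sig :: "'p \<Rightarrow> 'v list \<Rightarrow> 'v" where "sig j g = predicted g (mode g)"

definition Inv :: "'v list \<Rightarrow> bool" where
  "Inv g \<longleftrightarrow> (case mode g of None \<Rightarrow> g = pre \<xi> (length g)
     | Some k \<Rightarrow> k < length g \<and> lam (g ! k) < \<infinity> \<and> is_history E (g ! k) (drop k g) \<and>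
          compatible_except own (own (g ! k)) (Pun (g ! k)) (drop k g))"

end

context D2 begin

lemma step_valid:
  assumes h: "is_history E v0 g" and I: "Inv g"
  shows "(last g, predicted g (mode g)) \<in> E"
proof (cases "mode g")
  case None
  hence g: "g = pre \<xi> (length g)" using I unfolding Inv_def by simp
  have gne: "g \<noteq> []" using h history_ne by metis
  then obtain n where n: "length g = Suc n" by (cases g) auto
  have "last g = \<xi> n" using g n by (metis last_pre)
  then show ?thesis using None g n xplay unfolding predicted_def Xi_def is_play_def by simp
next
  case (Some k)
  define u where "u = g ! k"
  have k: "k < length g" "lam u < \<infinity>" "is_history E u (drop k g)" using I Some unfolding Inv_def u_def by auto
  have gd: "good u (Pun u)" using Pun_good k by blast
  have "drop k g \<noteq> []" using k by simp
  hence "last (drop k g) = last g" by simp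
  moreover have "(last (drop k g), Pun u (own (last (drop k g))) (drop k g)) \<in> E"
    using gd k unfolding good_def is_profile_def is_strategy_def by blast
  ultimately show ?thesis using Some unfolding predicted_def u_def by simp
qed

lemma mode_plan:
  assumes gne: "g \<noteq> []" and n: "length g \<le> n"
  shows "mode (pre (fp own sig g) n) = mode g"
  using n
proof (induction n)
  case 0 then show ?case using gne by simp
next
  case (Suc n)
  define \<rho> where "\<rho> = fp own sig g"
  have fo: "follows own sig g \<rho>" unfolding \<rho>_def by (rule follows_fp[OF gne])
  show ?case
  proof (cases "length g = Suc n")
    case True
    then show ?thesis using fo unfolding follows_def \<rho>_def by metis
  next
    case False
    hence len: "length g \<le> n" using Suc.prems by simp
    then obtain n' where n': "n = Suc n'" using gne by (cases n) auto
    have rn: "\<rho> n = predicted (pre \<rho> n) (mode (pre \<rho> n))"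
      using fo len n' unfolding follows_def sig_def by simp
    have "mode (pre \<rho> (Suc n)) = upd (pre \<rho> n) (\<rho> n) (mode (pre \<rho> n))"
      using mode_snoc[of "pre \<rho> n" "\<rho> n"] n' by (simp add: pre_Suc)
    also have "\<dots> = mode (pre \<rho> n)" using rn by (simp add: upd_def)
    finally show ?thesis using Suc.IH len by (simp add: \<rho>_def)
  qed
qed

lemma plan_None:
  assumes gne: "g \<noteq> []" and I: "Inv g" and N: "mode g = None"
  shows "fp own sig g = \<xi>"
proof
  define \<rho> where "\<rho> = fp own sig g"
  have fo: "follows own sig g \<rho>" unfolding \<rho>_def by (rule follows_fp[OF gne])
  have g: "g = pre \<xi> (length g)" using I N unfolding Inv_def by simp
  fix m show "fp own sig g m = \<xi> m" unfolding \<rho>_def[symmetric]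
  proof (induction m rule: less_induct)
    case (less m)
    show ?case
    proof (cases "m < length g")
      case True
      then show ?thesis using fo g unfolding follows_def by (metis nth_pre)
    next
      case False
      then obtain m' where m': "m = Suc m'" "length g \<le> Suc m'" using gne by (cases m) auto
      have pe: "pre \<rho> (Suc m') = pre \<xi> (Suc m')" using less m' by (simp add: pre_eq_iff)
      have md: "mode (pre \<rho> (Suc m')) = None" using mode_plan[OF gne m'(2)] N by (simp add: \<rho>_def)
      have "\<rho> (Suc m') = predicted (pre \<rho> (Suc m')) (mode (pre \<rho> (Suc m')))"
        using fo m' unfolding follows_def sig_def by simp
      also have "\<dots> = \<xi> (Suc m')" using md pe by (simp add: predicted_def Xi_def)
      finally show ?thesis using m' by simp
    qed
  qed
qed

lemma plan_Some:
  assumes gne: "g \<noteq> []" and I: "Inv g" and S: "mode g = Some k"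
  shows "shift k (fp own sig g) = fp own (Pun (g ! k)) (drop k g)"
proof -
  define \<rho> where "\<rho> = fp own sig g"
  have fo: "follows own sig g \<rho>" unfolding \<rho>_def by (rule follows_fp[OF gne])
  have k: "k < length g" using I S unfolding Inv_def by simp
  have pg: "pre \<rho> (length g) = g" using fo unfolding follows_def by blast
  show ?thesis unfolding \<rho>_def[symmetric]
  proof (rule sym, rule fp_eq)
    show "drop k g \<noteq> []" using k by simp
    show "follows own (Pun (g ! k)) (drop k g) (shift k \<rho>)"
      unfolding follows_def
    proof (intro conjI allI impI)
      show "pre (shift k \<rho>) (length (drop k g)) = drop k g"
        using pg k by (simp add: pre_shift)
    next
      fix m assume m: "length (drop k g) \<le> Suc m"
      have lm: "length g \<le> Suc (k + m)" using m k by simp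
      have md: "mode (pre \<rho> (Suc (k + m))) = Some k" using mode_plan[OF gne lm] S by (simp add: \<rho>_def)
      have "\<rho> (Suc (k + m)) = predicted (pre \<rho> (Suc (k + m))) (mode (pre \<rho> (Suc (k + m))))"
        using fo lm unfolding follows_def sig_def by simp
      also have "\<dots> = Pun (\<rho> k) (own (\<rho> (k + m))) (drop k (pre \<rho> (Suc (k + m))))"
        using md by (simp add: predicted_def)
      also have "\<rho> k = g ! k" using pg k by (metis nth_pre)
      also have "drop k (pre \<rho> (Suc (k + m))) = pre (shift k \<rho>) (Suc m)" by (simp add: pre_shift)
      finally show "shift k \<rho> (Suc m) = Pun (g ! k) (own (shift k \<rho> m)) (pre (shift k \<rho>) (Suc m))"
        by simp
    qed
  qed
qed

lemma plan_consistent: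
  assumes gne: "g \<noteq> []" and I: "Inv g"
  shows "consistent own \<mu> lam (shift (length g - 1) (fp own sig g))"
proof (cases "mode g")
  case None
  then show ?thesis using plan_None[OF gne I] xcons consistent_shift by metis
next
  case (Some k)
  define u where "u = g ! k"
  have k: "k < length g" "lam u < \<infinity>" "is_history E u (drop k g)"
     "compatible_except own (own u) (Pun u) (drop k g)" using I Some unfolding Inv_def u_def by auto
  have gd: "good u (Pun u)" using Pun_good k by blast
  have "consistent own \<mu> lam (shift (length (drop k g) - 1) (fp own (Pun u) (drop k g)))"
    using gd k unfolding good_def by blast
  also have "fp own (Pun u) (drop k g) = shift k (fp own sig g)"
    using plan_Some[OF gne I Some] by (simp add: u_def)
  also have "shift (length (drop k g) - 1) (shift k (fp own sig g)) = shift (length g - 1) (fp own sig g)"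
    using k(1) by simp
  finally show ?thesis .
qed

lemma lam_last_fin:
  assumes gne: "g \<noteq> []" and I: "Inv g"
  shows "lam (last g) < \<infinity>"
proof -
  have c: "consistent own \<mu> lam (shift (length g - 1) (fp own sig g))" by (rule plan_consistent[OF gne I])
  have "fp own sig g (length g - 1) = last g" using gne by (simp add: fp_nth last_conv_nth)
  moreover have "lam (shift (length g - 1) (fp own sig g) 0) \<le> ereal (\<mu> (\<lambda>k. shift (length g - 1) (fp own sig g) (0 + k)) (own (shift (length g - 1) (fp own sig g) 0)))"
    using c unfolding consistent_def by blast
  ultimately have "lam (last g) \<le> ereal (\<mu> (\<lambda>k. shift (length g - 1) (fp own sig g) (0 + k)) (own (last g)))"
    by simp
  then show ?thesis using order_le_less_trans by fastforce
qed

lemma Inv_new: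
  assumes gne: "g \<noteq> []" and I: "Inv g" and e: "(last g, w) \<in> E"
    and M: "mode (g @ [w]) = Some (length g - 1)"
  shows "Inv (g @ [w])"
proof -
  define k where "k = length g - 1"
  have kl: "k < length g" using gne by (simp add: k_def)
  have gk: "(g @ [w]) ! k = last g" using gne by (simp add: k_def nth_append last_conv_nth)
  have dg: "drop k g = [last g]"
  proof -
    have "drop (length (butlast g)) (butlast g @ [last g]) = [last g]" by simp
    then show ?thesis using gne by (simp add: k_def)
  qed
  have dk: "drop k (g @ [w]) = [last g, w]" using dg kl by simp
  have hist: "is_history E (last g) [last g, w]" using e by (simp add: is_history_def is_path_def)
  have comp: "compatible_except own (own (last g)) \<pi> [last g, w]" for \<pi>
    unfolding compatible_except_def by (auto simp: less_Suc_eq)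
  show ?thesis unfolding Inv_def using M kl gk dk hist comp lam_last_fin[OF gne I] by (simp add: k_def)
qed

lemma Inv_keep:
  assumes gne: "g \<noteq> []" and I: "Inv g" and e: "(last g, w) \<in> E" and S: "mode g = Some k"
    and M: "mode (g @ [w]) = Some k"
    and c: "own (g ! k) = own (last g) \<or> w = Pun (g ! k) (own (last g)) (drop k g)"
  shows "Inv (g @ [w])"
proof -
  have k: "k < length g" "lam (g ! k) < \<infinity>" "is_history E (g ! k) (drop k g)"
     "compatible_except own (own (g ! k)) (Pun (g ! k)) (drop k g)" using I S unfolding Inv_def by auto
  have dne: "drop k g \<noteq> []" using k by simp
  have ld: "last (drop k g) = last g" using dne by simp
  have gk: "(g @ [w]) ! k = g ! k" using k by (simp add: nth_append)
  have dk: "drop k (g @ [w]) = drop k g @ [w]" using k by simp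
  have hist: "is_history E (g ! k) (drop k g @ [w])"
    using k(3) is_path_snoc[OF dne, of E w] e ld dne by (simp add: is_history_def)
  have comp: "compatible_except own (own (g ! k)) (Pun (g ! k)) (drop k g @ [w])"
    by (rule compat_snoc[OF k(4) dne]) (use c ld in auto)
  show ?thesis unfolding Inv_def using M k gk dk hist comp by simp
qed

lemma Inv_snoc:
  assumes gne: "g \<noteq> []" and I: "Inv g" and e: "(last g, w) \<in> E"
  shows "Inv (g @ [w])"
proof -
  have M: "mode (g @ [w]) = upd g w (mode g)" by (rule mode_snoc[OF gne])
  show ?thesis
  proof (cases "mode g")
    case None
    show ?thesis
    proof (cases "w = predicted g (mode g)")
      case True
      have g: "g = pre \<xi> (length g)" using I None unfolding Inv_def by simp
      have "w = \<xi> (length g)" using True None g by (simp add: predicted_def Xi_def)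
      hence "g @ [w] = pre \<xi> (length (g @ [w]))" using g by (simp add: pre_Suc)
      moreover have "mode (g @ [w]) = None" using M True None by (simp add: upd_def)
      ultimately show ?thesis unfolding Inv_def by simp
    next
      case False
      have "mode (g @ [w]) = Some (length g - 1)" using M False None by (simp add: upd_def)
      then show ?thesis by (rule Inv_new[OF gne I e])
    qed
  next
    case (Some k)
    show ?thesis
    proof (cases "w = predicted g (mode g)")
      case True
      have "mode (g @ [w]) = Some k" using M True Some by (simp add: upd_def)
      moreover have "w = Pun (g ! k) (own (last g)) (drop k g)" using True Some by (simp add: predicted_def)
      ultimately show ?thesis using Inv_keep[OF gne I e Some] by blast
    next
      case False
      show ?thesis
      proof (cases "own (g ! k) = own (last g) \<and> lam (g ! k) \<le> lam (last g)")
        case True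
        have "mode (g @ [w]) = Some k" using M False Some True by (simp add: upd_def)
        then show ?thesis using Inv_keep[OF gne I e Some] True by blast
      next
        case F2: False
        have "mode (g @ [w]) = Some (length g - 1)" using M False Some F2 by (auto simp: upd_def)
        then show ?thesis by (rule Inv_new[OF gne I e])
      qed
    qed
  qed
qed

lemma Inv_all: "is_history E v0 g \<Longrightarrow> Inv g"
proof (induction g rule: rev_induct)
  case Nil then show ?case by (simp add: is_history_def is_path_def)
next
  case (snoc x g)
  show ?case
  proof (cases "g = []")
    case True
    hence "x = v0" using snoc.prems by (simp add: is_history_def)
    then show ?thesis using True x0 unfolding Inv_def by (simp add: pre_def)
  next
    case False
    have p: "is_path E g \<and> (last g, x) \<in> E"
      using is_path_snoc[OF False, of E x] snoc.prems by (simp add: is_history_def)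
    have "is_history E v0 g" using p snoc.prems False by (simp add: is_history_def)
    then show ?thesis using snoc.IH Inv_snoc[OF False] p by blast
  qed
qed

lemma sig_profile: "is_profile E own v0 sig"
  unfolding is_profile_def is_strategy_def
proof (intro allI impI)
  fix i g assume "is_history E v0 g \<and> own (last g) = i"
  then show "(last g, sig i g) \<in> E" using step_valid Inv_all unfolding sig_def by blast
qed

lemma sig_outcome: "outcome own sig v0 = \<xi>"
  using plan_None[of "[v0]"] by (simp add: outcome_fp Inv_def x0 pre_def)

end

context D2 begin

lemma sig_check:
  assumes hist: "is_history E v0 hist" and t: "is_strategy E own v0 i \<tau>"
  shows "\<mu> (fp own (sig(i := \<tau>)) hist) i \<le> \<mu> (fp own sig hist) i + \<epsilon>"
proof -
  define X where "X = sig(i := \<tau>)"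
  have profX: "is_profile E own v0 X" unfolding X_def by (rule profile_upd[OF sig_profile t])
  define \<rho> where "\<rho> = fp own X hist"
  define \<pi> where "\<pi> = fp own sig hist"
  have histne: "hist \<noteq> []" using hist history_ne by metis
  have rplay: "is_play E \<rho>" using fp_valid[OF profX hist] by (simp add: \<rho>_def)
  have rhist: "is_history E v0 (pre \<rho> (Suc n))" for n unfolding \<rho>_def by (rule fp_hist[OF profX hist])
  have phist: "is_history E v0 (pre \<pi> (Suc n))" for n unfolding \<pi>_def by (rule fp_hist[OF sig_profile hist])
  have pplay: "is_play E \<pi>" using fp_valid[OF sig_profile hist] by (simp add: \<pi>_def)
  have "\<mu> \<rho> i \<le> \<mu> \<pi> i + \<epsilon>"
  proof (cases "\<rho> = \<pi>")
    case True then show ?thesis using eps by simp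
  next
    case False
    then obtain m where "\<rho> m \<noteq> \<pi> m" by blast
    define p0 where "p0 = (LEAST m. \<rho> m \<noteq> \<pi> m)"
    have p0: "\<rho> p0 \<noteq> \<pi> p0" unfolding p0_def by (rule LeastI) fact
    have bef: "\<rho> m = \<pi> m" if "m < p0" for m using not_less_Least[OF that[unfolded p0_def]] by blast
    have "\<not> p0 < length hist"
    proof
      assume "p0 < length hist"
      then show False using p0 by (simp add: \<rho>_def \<pi>_def fp_nth)
    qed
    then obtain p where pp: "p0 = Suc p" "length hist \<le> Suc p" using histne by (cases p0) auto
    define g where "g = pre \<pi> (Suc p)"
    have gr: "pre \<rho> (Suc p) = g" unfolding g_def using bef pp by (simp add: pre_eq_iff)
    have rp: "\<rho> p = \<pi> p" using bef pp by simp
    have ghist: "is_history E v0 g" unfolding g_def by (rule phist)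
    have gne: "g \<noteq> []" by (simp add: g_def)
    have Ig: "Inv g" by (rule Inv_all[OF ghist])
    have pstep: "\<pi> (Suc p) = predicted g (mode g)"
      using fp_step[OF histne pp(2), of own sig] by (simp add: \<pi>_def g_def sig_def)
    have rstep: "\<rho> (Suc n) = X (own (\<rho> n)) (pre \<rho> (Suc n))" if "p \<le> n" for n
      using fp_step[OF histne, of n own X] pp that by (simp add: \<rho>_def)
    have own_p: "own (\<rho> p) = i"
    proof (rule ccontr)
      assume "own (\<rho> p) \<noteq> i"
      hence "\<rho> (Suc p) = sig (own (\<rho> p)) g" using rstep[of p] gr by (simp add: X_def)
      then show False using p0 pp pstep by (simp add: sig_def)
    qed
    have dev: "\<rho> (Suc p) \<noteq> predicted g (mode g)" using p0 pp pstep by simp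
    have fpg: "fp own sig g = \<pi>" unfolding g_def \<pi>_def by (rule fp_pre[OF histne pp(2)])
    have cg: "consistent own \<mu> lam (shift p \<pi>)" using plan_consistent[OF gne Ig] fpg by (simp add: g_def)
    have "lam (shift p \<pi> 0) \<le> ereal (\<mu> (\<lambda>k. shift p \<pi> (0 + k)) (own (shift p \<pi> 0)))"
      using cg unfolding consistent_def by blast
    hence "lam (\<pi> p) \<le> ereal (\<mu> (shift p \<pi>) i)" using own_p rp by (simp add: shift_def)
    hence planv: "lam (\<rho> p) \<le> ereal (\<mu> \<pi> i)" using PI_shift[OF PI pplay] rp by simp
    define md where "md n = mode (pre \<rho> (Suc n))" for n
    have mdstep: "md (Suc n) = upd (pre \<rho> (Suc n)) (\<rho> (Suc n)) (md n)" for n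
      unfolding md_def using mode_snoc[of "pre \<rho> (Suc n)" "\<rho> (Suc n)"] by (simp add: pre_Suc[of \<rho> "Suc n"])
    have follow: "\<rho> (Suc n) = predicted (pre \<rho> (Suc n)) (md n)" if "p \<le> n" "own (\<rho> n) \<noteq> i" for n
      using rstep[OF that(1)] that(2) by (simp add: X_def sig_def md_def)
    have Ir: "Inv (pre \<rho> (Suc n))" for n by (rule Inv_all[OF rhist])
    have klt: "k < Suc n" if "md n = Some k" for n k using Ir[of n] that unfolding Inv_def md_def by simp
    have B: "md (Suc (Suc n)) = Some k \<or> (md (Suc (Suc n)) = Some (Suc n) \<and> own (\<rho> (Suc n)) = i \<and> lam (\<rho> (Suc n)) < lam (\<rho> k))"
      if "p \<le> n" "md (Suc n) = Some k" "own (\<rho> k) = i" for n k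
    proof -
      have kl: "k < Suc (Suc n)" using klt[OF that(2)] .
      have nth: "pre \<rho> (Suc (Suc n)) ! k = \<rho> k" using kl by simp
      show ?thesis
      proof (cases "\<rho> (Suc (Suc n)) = predicted (pre \<rho> (Suc (Suc n))) (md (Suc n))")
        case True
        then show ?thesis using mdstep[of "Suc n"] that by (simp add: upd_def)
      next
        case F1: False
        hence oi: "own (\<rho> (Suc n)) = i" using follow[of "Suc n"] that by auto
        show ?thesis
        proof (cases "lam (\<rho> k) \<le> lam (\<rho> (Suc n))")
          case True
          then show ?thesis using mdstep[of "Suc n"] that F1 oi nth by (simp add: upd_def)
        next
          case False
          then show ?thesis using mdstep[of "Suc n"] that F1 oi nth by (auto simp: upd_def)
        qed
      qed
    qed
    have A0: "\<exists>k. md (Suc p) = Some k \<and> own (\<rho> k) = i \<and> lam (\<rho> k) \<le> lam (\<rho> p)"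
    proof -
      have mp: "md p = mode g" by (simp add: md_def gr)
      have ms: "md (Suc p) = upd g (\<rho> (Suc p)) (mode g)" using mdstep[of p] gr mp by simp
      have lg: "length g - 1 = p" "last g = \<rho> p" using gr[symmetric] by auto
      show ?thesis
      proof (cases "mode g")
        case None
        then show ?thesis using ms dev lg own_p by (simp add: upd_def)
      next
        case (Some k)
        have "k < Suc p" using klt[of p k] mp Some by simp
        hence gk: "g ! k = \<rho> k" using gr[symmetric] by simp
        show ?thesis
        proof (cases "own (g ! k) = own (last g) \<and> lam (g ! k) \<le> lam (last g)")
          case True
          then show ?thesis using ms dev Some gk lg own_p by (simp add: upd_def)
        next
          case False
          then show ?thesis using ms dev Some gk lg own_p by (simp add: upd_def)
        qed
      qed
    qed
    have A: "\<exists>k. md n = Some k \<and> own (\<rho> k) = i \<and> lam (\<rho> k) \<le> lam (\<rho> p)" if "Suc p \<le> n" for n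
      using that
    proof (induction n rule: dec_induct)
      case base then show ?case by (rule A0)
    next
      case (step n)
      then obtain k where k: "md n = Some k" "own (\<rho> k) = i" "lam (\<rho> k) \<le> lam (\<rho> p)" by blast
      obtain n' where n': "n = Suc n'" "p \<le> n'" using step.hyps by (cases n) auto
      have "md (Suc n) = Some k \<or> (md (Suc n) = Some n \<and> own (\<rho> n) = i \<and> lam (\<rho> n) < lam (\<rho> k))"
        using B[of n' k] n' k by simp
      then show ?case
      proof
        assume "md (Suc n) = Some k" then show ?case using k by blast
      next
        assume a: "md (Suc n) = Some n \<and> own (\<rho> n) = i \<and> lam (\<rho> n) < lam (\<rho> k)"
        hence "lam (\<rho> n) \<le> lam (\<rho> p)" using k(3) by (meson less_imp_le order_trans)
        then show ?case using a by blast
      qed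
    qed
    define K where "K n = the (md n)" for n
    define V where "V n = lam (\<rho> (K n))" for n
    have mdK: "md n = Some (K n)" "own (\<rho> (K n)) = i" "lam (\<rho> (K n)) \<le> lam (\<rho> p)" if "Suc p \<le> n" for n
      using A[OF that] by (auto simp: K_def)
    have VB: "V (Suc n) \<le> V n \<and> (V (Suc n) = V n \<longrightarrow> K (Suc n) = K n)" if "Suc p \<le> n" for n
    proof -
      define n' where "n' = n - 1"
      have n': "n = Suc n'" "p \<le> n'" using that by (auto simp: n'_def)
      have "md (Suc n) = Some (K n) \<or> (md (Suc n) = Some n \<and> own (\<rho> n) = i \<and> lam (\<rho> n) < lam (\<rho> (K n)))"
        using B[of n' "K n"] n' mdK[OF that] by simp
      then show ?thesis by (auto simp: V_def K_def)
    qed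
    define W where "W = V ` {Suc p..}"
    have Wfin: "finite W"
    proof -
      have "W \<subseteq> range lam" by (auto simp: W_def V_def)
      then show ?thesis by (rule finite_subset) simp
    qed
    have Wne: "W \<noteq> {}" by (auto simp: W_def)
    obtain N0 where N0: "Suc p \<le> N0" "V N0 = Min W"
      using Min_in[OF Wfin Wne] unfolding W_def by auto
    have Vc: "V n = V N0" if "N0 \<le> n" for n
      using that
    proof (induction n rule: dec_induct)
      case (step n)
      have "V (Suc n) \<in> W" using step.hyps N0 by (auto simp: W_def)
      hence m1: "Min W \<le> V (Suc n)" using Wfin by simp
      have sp: "Suc p \<le> n" using step.hyps N0(1) by simp
      have m2: "V (Suc n) \<le> V n" using VB[OF sp] by (rule conjunct1)
      have "V (Suc n) \<le> Min W" using m2 step.IH N0(2) by simp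
      hence "V (Suc n) = Min W" using m1 by (rule order.antisym)
      then show ?case using N0(2) by simp
    qed simp
    have Kc: "K n = K N0" if "N0 \<le> n" for n
      using that
    proof (induction n rule: dec_induct)
      case (step n)
      have e: "V (Suc n) = V n" using Vc[of "Suc n"] Vc[of n] step.hyps by simp
      have sp: "Suc p \<le> n" using step.hyps N0(1) by simp
      have "K (Suc n) = K n" using VB[OF sp] e by blast
      then show ?case using step.IH by simp
    qed simp
    define k where "k = K N0"
    define u where "u = \<rho> k"
    have mdk: "md n = Some k" if "N0 \<le> n" for n using mdK[of n] Kc[OF that] N0 that by (simp add: k_def)
    have ou: "own u = i" using mdK[of N0] N0 by (simp add: u_def k_def)
    have lu: "lam u \<le> lam (\<rho> p)" using mdK[of N0] N0 by (simp add: u_def k_def)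
    have kN: "k < Suc N0" using klt mdk by blast
    have Iu: "lam u < \<infinity>"
      using Ir[of N0] mdk[of N0] kN unfolding Inv_def md_def by (simp add: u_def)
    have comp: "compatible_except own i (Pun u) (drop k (pre \<rho> (Suc n)))" if "N0 \<le> n" for n
      using Ir[of n] mdk[OF that] klt[OF mdk[OF that]] ou unfolding Inv_def md_def by (simp add: u_def)
    define Z where "Z = shift k \<rho>"
    have pZ: "pre Z m = drop k (pre \<rho> (k + m))" for m by (simp add: Z_def pre_shift)
    have gd: "good u (Pun u)" by (rule Pun_good[OF Iu])
    have pprof: "is_profile E own u (Pun u)" using gd unfolding good_def by blast
    define \<tau>2 where "\<tau>2 h = (if h = pre Z (length h) then Z (length h) else Pun u i h)" for h
    have t2: "is_strategy E own u i \<tau>2"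
      unfolding is_strategy_def
    proof (intro allI impI)
      fix h assume h: "is_history E u h \<and> own (last h) = i"
      show "(last h, \<tau>2 h) \<in> E"
      proof (cases "h = pre Z (length h)")
        case True
        have hne: "h \<noteq> []" using h history_ne by metis
        then obtain l where l: "length h = Suc l" by (cases h) auto
        have "last h = Z l" using True l by (metis last_pre)
        moreover have "(Z l, Z (Suc l)) \<in> E" using rplay by (simp add: Z_def is_play_def)
        ultimately show ?thesis using True l by (simp add: \<tau>2_def)
      next
        case False
        then show ?thesis using pprof h unfolding is_profile_def is_strategy_def \<tau>2_def by auto
      qed
    qed
    have Zfp: "fp own ((Pun u)(i := \<tau>2)) [u] = Z"
    proof (rule fp_eq)
      show "follows own ((Pun u)(i := \<tau>2)) [u] Z"
        unfolding follows_def
      proof (intro conjI allI impI)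
        show "pre Z (length [u]) = [u]" by (simp add: pre_def Z_def u_def)
      next
        fix m
        show "Z (Suc m) = ((Pun u)(i := \<tau>2)) (own (Z m)) (pre Z (Suc m))"
        proof (cases "own (Z m) = i")
          case True
          then show ?thesis by (simp add: \<tau>2_def)
        next
          case False
          define n where "n = N0 + k + Suc m"
          have nN: "N0 \<le> n" by (simp add: n_def)
          define h where "h = drop k (pre \<rho> (Suc n))"
          have hZ: "h = pre Z (Suc n - k)" using pZ[of "Suc n - k"] by (simp add: h_def n_def ac_simps)
          have c: "compatible_except own i (Pun u) h" using comp[OF nN] by (simp add: h_def)
          have ml: "Suc m < length h" by (simp add: h_def n_def)
          have "h ! Suc m = Pun u (own (h ! m)) (take (Suc m) h)"
            using c ml False hZ unfolding compatible_except_def by (simp add: n_def)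
          moreover have "h ! Suc m = Z (Suc m)" "h ! m = Z m" "take (Suc m) h = pre Z (Suc m)"
            using hZ ml by (auto simp: take_pre n_def)
          ultimately show ?thesis using False by simp
        qed
      qed
    qed simp
    have "ereal (\<mu> (fp own ((Pun u)(own u := \<tau>2)) [u]) (own u)) \<le> lam u + ereal \<epsilon>"
      using gd t2 ou unfolding good_def by blast
    hence zb: "ereal (\<mu> Z i) \<le> lam u + ereal \<epsilon>" using Zfp ou by simp
    have "\<mu> Z = \<mu> \<rho>" unfolding Z_def by (rule PI_shift[OF PI rplay])
    hence "ereal (\<mu> \<rho> i) \<le> lam u + ereal \<epsilon>" using zb by simp
    also have "\<dots> \<le> ereal (\<mu> \<pi> i) + ereal \<epsilon>" using lu planv by (intro add_right_mono) simp
    finally show ?thesis by simp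
  qed
  then show ?thesis by (simp add: \<rho>_def \<pi>_def X_def)
qed

lemma sig_SPE: "eps_SPE E own \<mu> \<epsilon> v0 sig"
  unfolding eps_SPE_iff using sig_profile sig_check by blast

end

theorem theorem2:
  fixes E :: "('v::finite \<times> 'v) set" and own :: "'v \<Rightarrow> 'p::finite"
    and \<mu> :: "(nat \<Rightarrow> 'v) \<Rightarrow> 'p \<Rightarrow> real" and \<epsilon> :: real and v0 :: 'v
    and lam_star :: "'v \<Rightarrow> ereal" and \<xi> :: "nat \<Rightarrow> 'v"
  assumes "game E"
    and "prefix_independent E \<mu>"
    and "\<epsilon> \<ge> 0"
    and "least_eps_fixed_point E own \<mu> \<epsilon> lam_star"
    and "is_play E \<xi>" and "\<xi> 0 = v0"
  shows "((\<exists>\<sigma>. eps_SPE E own \<mu> \<epsilon> v0 \<sigma> \<and> outcome own \<sigma> v0 = \<xi>) \<longrightarrow> consistent own \<mu> lam_star \<xi>)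
       \<and> (steady_negotiation E own \<mu> \<and> consistent own \<mu> lam_star \<xi>
            \<longrightarrow> (\<exists>\<sigma>. eps_SPE E own \<mu> \<epsilon> v0 \<sigma> \<and> outcome own \<sigma> v0 = \<xi>))"
proof (intro conjI impI)
  assume "\<exists>\<sigma>. eps_SPE E own \<mu> \<epsilon> v0 \<sigma> \<and> outcome own \<sigma> v0 = \<xi>"
  then obtain \<sigma> where S: "eps_SPE E own \<mu> \<epsilon> v0 \<sigma>" and o: "outcome own \<sigma> v0 = \<xi>" by blast
  have "consistent own \<mu> lam_star (fp own \<sigma> [v0])" by (rule dir1[OF assms(2) assms(4) S assms(3)])
  then show "consistent own \<mu> lam_star \<xi>" using o by (simp add: outcome_fp)
next
  assume a: "steady_negotiation E own \<mu> \<and> consistent own \<mu> lam_star \<xi>"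
  have efp: "eps_fixed_point E own \<mu> \<epsilon> lam_star" using assms(4) unfolding least_eps_fixed_point_def by blast
  interpret D2 E own \<mu> \<epsilon> lam_star \<xi> v0
    using assms a efp by unfold_locales auto
  show "\<exists>\<sigma>. eps_SPE E own \<mu> \<epsilon> v0 \<sigma> \<and> outcome own \<sigma> v0 = \<xi>"
    using sig_SPE sig_outcome by blast
qed

end
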